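(* For every integer $n\ge1$, $$B_n(t)=CB_n(t)+\frac{1}{n}(1-t)\,CB_n'(t),$$ where $CB_n'(t)$ denotes the derivative of the polynomial $CB_n(t)$ with respect to $t$.
   Context: For $\pi=[\pi_1,\ldots,\pi_n]\in S_n$ (one-line notation), a pair $(\pi_i,\pi_{i+1})$ with $1\le i\le n-1$ is a (regular) bond if $\pi_i-\pi_{i+1}=\pm1$. The pair $(\pi_n,\pi_1)$ is an edge bond if $\pi_n-\pi_1=\pm1$. A cyclic bond is a regular bond or an edge bond. Let $bnd(\pi)$ be the number of regular bonds and $cbnd(\pi)$ the number of cyclic bonds of $\pi$. For $n\ge1$ let $B_n(t)=\sum_{\pi\in S_n}t^{bnd(\pi)}$ and $CB_n(t)=\sum_{\pi\in S_n}t^{cbnd(\pi)}$. In particular each permutation of $S_2$ has $2$ cyclic bonds (so $CB_2(t)=2t^2$), and $B_1(t)=CB_1(t)=1$. *)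

theory Defs
  imports "HOL-Combinatorics.Multiset_Permutations" "HOL-Computational_Algebra.Polynomial"
begin

definition adj :: "nat \<Rightarrow> nat \<Rightarrow> bool" where
  "adj a b \<longleftrightarrow> a = b + 1 \<or> b = a + 1"

definition bnd :: "nat list \<Rightarrow> nat" where
  "bnd xs = card {i. i + 1 < length xs \<and> adj (xs ! i) (xs ! (i + 1))}"

definition cbnd :: "nat list \<Rightarrow> nat" where
  "cbnd xs = bnd xs + (if xs \<noteq> [] \<and> adj (last xs) (hd xs) then 1 else 0)"

definition B :: "nat \<Rightarrow> real poly" where
  "B n = (\<Sum>xs\<in>permutations_of_set {1..n}. monom 1 (bnd xs))"

definition CB :: "nat \<Rightarrow> real poly" where
  "CB n = (\<Sum>xs\<in>permutations_of_set {1..n}. monom 1 (cbnd xs))"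

end

theory Submission
  imports Defs
begin

definition ind :: "bool \<Rightarrow> nat" where "ind b = (if b then 1 else 0)"

lemma bnd_sum: "bnd xs = (\<Sum>i<length xs - 1. ind (adj (xs ! i) (xs ! (i + 1))))"
proof -
  have "{i. i + 1 < length xs \<and> adj (xs ! i) (xs ! (i + 1))}
        = {i\<in>{..<length xs - 1}. adj (xs ! i) (xs ! (i + 1))}" by auto
  moreover have "(\<Sum>i<length xs - 1. ind (adj (xs ! i) (xs ! (i + 1))))
     = card {i\<in>{..<length xs - 1}. adj (xs ! i) (xs ! (i + 1))}"
    unfolding ind_def by (simp add: sum.If_cases Int_def)
  ultimately show ?thesis unfolding bnd_def by simp
qed

lemma bnd_Cons: "ys \<noteq> [] \<Longrightarrow> bnd (a # ys) = ind (adj a (hd ys)) + bnd ys"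
proof -
  assume "ys \<noteq> []"
  then obtain b zs where ys: "ys = b # zs" by (cases ys) auto
  have "bnd (a # ys) = (\<Sum>i<Suc (length zs). ind (adj ((a#b#zs) ! i) ((a#b#zs) ! (i + 1))))"
    unfolding bnd_sum ys by simp
  also have "\<dots> = ind (adj a b) + (\<Sum>i<length zs. ind (adj ((b#zs) ! i) ((b#zs) ! (i + 1))))"
    by (subst sum.lessThan_Suc_shift) simp
  also have "\<dots> = ind (adj a (hd ys)) + bnd ys" unfolding bnd_sum ys by simp
  finally show ?thesis .
qed

lemma bnd_snoc: "ys \<noteq> [] \<Longrightarrow> bnd (ys @ [a]) = bnd ys + ind (adj (last ys) a)"
proof -
  assume ne: "ys \<noteq> []"
  then obtain m where m: "length ys = Suc m" by (cases ys) auto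
  have "bnd (ys @ [a]) = (\<Sum>i<Suc m. ind (adj ((ys@[a]) ! i) ((ys@[a]) ! (i + 1))))"
    unfolding bnd_sum using m by simp
  also have "\<dots> = (\<Sum>i<m. ind (adj (ys ! i) (ys ! (i + 1)))) + ind (adj (last ys) a)"
    using m ne by (simp add: nth_append last_conv_nth)
  also have "\<dots> = bnd ys + ind (adj (last ys) a)" unfolding bnd_sum using m by simp
  finally show ?thesis .
qed

lemma cbnd_alt: "xs \<noteq> [] \<Longrightarrow> cbnd xs = bnd xs + ind (adj (last xs) (hd xs))"
  unfolding cbnd_def ind_def by simp

lemma cbnd_rotate1: "cbnd (rotate1 xs) = cbnd xs"
proof (cases xs)
  case Nil then show ?thesis by simp
next
  case (Cons a ys)
  show ?thesis
  proof (cases "ys = []")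
    case True then show ?thesis using Cons by simp
  next
    case False
    have "cbnd (rotate1 xs) = bnd (ys @ [a]) + ind (adj a (hd ys))"
      using Cons False by (simp add: cbnd_alt hd_append)
    also have "\<dots> = cbnd xs" using Cons False
      by (simp add: cbnd_alt bnd_snoc bnd_Cons adj_def ind_def)
    finally show ?thesis .
  qed
qed

lemma cbnd_rotate: "cbnd (rotate k xs) = cbnd xs"
  by (induction k) (simp_all add: cbnd_rotate1)

definition edge :: "nat list \<Rightarrow> nat" where
  "edge xs = ind (adj (last xs) (hd xs))"

lemma bnd_rotate: "xs \<noteq> [] \<Longrightarrow> bnd (rotate k xs) = cbnd xs - edge (rotate k xs)"
  using cbnd_alt[of "rotate k xs"] cbnd_rotate[of k xs] unfolding edge_def by simp

lemma edge_rotate_pos: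
  assumes "0 < k" "k < length xs"
  shows "edge (rotate k xs) = ind (adj (xs ! (k - 1)) (xs ! k))"
proof -
  have ne: "rotate k xs \<noteq> []" using assms by auto
  have h: "hd (rotate k xs) = xs ! k"
    using assms ne by (simp add: hd_conv_nth nth_rotate)
  have "last (rotate k xs) = rotate k xs ! (length xs - 1)"
    using ne by (simp add: last_conv_nth)
  also have "\<dots> = xs ! ((k + (length xs - 1)) mod length xs)"
    using assms by (simp add: nth_rotate)
  also have "(k + (length xs - 1)) mod length xs = k - 1"
  proof -
    have "k + (length xs - 1) = (k - 1) + length xs" using assms by simp
    moreover have "((k - 1) + length xs) mod length xs = k - 1"
      by (subst mod_add_self2) (use assms in simp)
    ultimately show ?thesis by metis
  qed
  finally show ?thesis unfolding edge_def using h by simp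
qed

lemma sum_edge:
  assumes "xs \<noteq> []"
  shows "(\<Sum>k<length xs. edge (rotate k xs)) = cbnd xs"
proof -
  obtain m where m: "length xs = Suc m" using assms by (cases xs) auto
  have "(\<Sum>k<length xs. edge (rotate k xs)) = edge xs + (\<Sum>k<m. edge (rotate (Suc k) xs))"
    unfolding m by (subst sum.lessThan_Suc_shift) simp
  also have "(\<Sum>k<m. edge (rotate (Suc k) xs)) = (\<Sum>k<m. ind (adj (xs ! k) (xs ! (k+1))))"
    by (rule sum.cong) (use m edge_rotate_pos[of "Suc _" xs] in auto)
  also have "\<dots> = bnd xs" unfolding bnd_sum m by simp
  finally show ?thesis using cbnd_alt[OF assms] unfolding edge_def by simp
qed

lemma lin_monom: "[:1, -1:] * monom (a::real) m = monom a m - monom a (Suc m)"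
  by (simp add: poly_eq_iff coeff_monom coeff_pCons split: nat.split)

lemma per_list:
  assumes ne: "xs \<noteq> []"
  shows "(\<Sum>k<length xs. monom (1::real) (bnd (rotate k xs)))
         = smult (real (length xs)) (monom 1 (cbnd xs)) + [:1, -1:] * pderiv (monom 1 (cbnd xs))"
proof -
  define c where "c = cbnd xs"
  define e where "e k = edge (rotate k xs)" for k
  have e01: "e k = 0 \<or> e k = 1" for k unfolding e_def edge_def ind_def by simp
  have se: "(\<Sum>k<length xs. e k) = c" unfolding e_def c_def by (rule sum_edge[OF ne])
  have ec: "e k \<le> c" if "k < length xs" for k
  proof -
    have "e k \<le> (\<Sum>k<length xs. e k)"
      by (rule member_le_sum) (use that in auto)
    then show ?thesis using se by simp
  qed
  have step: "monom (1::real) (bnd (rotate k xs)) = monom 1 c + smult (real (e k)) (monom 1 (c - 1) - monom 1 c)"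
    if "k < length xs" for k
  proof -
    have b: "bnd (rotate k xs) = c - e k" unfolding c_def e_def using bnd_rotate[OF ne] by simp
    show ?thesis using e01[of k] ec[OF that] unfolding b
      by (auto simp: algebra_simps)
  qed
  have "(\<Sum>k<length xs. monom (1::real) (bnd (rotate k xs)))
       = (\<Sum>k<length xs. monom 1 c + smult (real (e k)) (monom 1 (c - 1) - monom 1 c))"
    by (rule sum.cong) (simp_all add: step)
  also have "\<dots> = smult (real (length xs)) (monom 1 c) + smult (real c) (monom 1 (c - 1) - monom 1 c)"
  proof -
    have "(\<Sum>k<length xs. smult (real (e k)) (monom (1::real) (c - 1) - monom 1 c))
        = smult (\<Sum>k<length xs. real (e k)) (monom (1::real) (c - 1) - monom 1 c)"
      by (simp add: smult_sum)
    also have "(\<Sum>k<length xs. real (e k)) = real c" using se by (metis of_nat_sum)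
    finally have 1: "(\<Sum>k<length xs. smult (real (e k)) (monom (1::real) (c - 1) - monom 1 c))
        = smult (real c) (monom (1::real) (c - 1) - monom 1 c)" .
    have 2: "(\<Sum>k<length xs. monom (1::real) c) = smult (real (length xs)) (monom 1 c)"
      by (simp add: smult_monom of_nat_poly)
    show ?thesis by (simp only: sum.distrib 1 2)
  qed
  also have "smult (real c) (monom 1 (c - 1) - monom 1 c) = [:1, -1:] * pderiv (monom 1 c)"
    by (cases c) (simp_all add: pderiv_monom poly_eq_iff coeff_monom coeff_pCons split: nat.split)
  finally show ?thesis unfolding c_def .
qed

lemma rotate_inj: "inj (rotate k)"
proof (induction k)
  case 0 then show ?case by simp
next
  case (Suc k)
  have r: "rotate (Suc k) = rotate1 \<circ> rotate k" by (rule ext) simp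
  show ?case unfolding r by (rule inj_compose[OF inj_rotate1 Suc.IH])
qed

lemma rotate_perm_image:
  "rotate k ` permutations_of_set {1..n} = permutations_of_set {1..n}"
proof (rule endo_inj_surj)
  show "finite (permutations_of_set {1..n})" by simp
  show "rotate k ` permutations_of_set {1..n} \<subseteq> permutations_of_set {1..n}"
    by (auto simp: permutations_of_set_def)
  show "inj_on (rotate k) (permutations_of_set {1..n})"
    using rotate_inj inj_on_subset by blast
qed

lemma sum_rotate:
  "(\<Sum>xs\<in>permutations_of_set {1..n}. f (rotate k xs)) = (\<Sum>xs\<in>permutations_of_set {1..n}. f xs)"
proof -
  have "(\<Sum>xs\<in>permutations_of_set {1..n}. f (rotate k xs))
       = (\<Sum>xs\<in>rotate k ` permutations_of_set {1..n}. f xs)"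
    by (rule sum.reindex[symmetric, unfolded o_def]) (use rotate_inj inj_on_subset in blast)
  then show ?thesis by (simp only: rotate_perm_image)
qed

lemma perm_length: "xs \<in> permutations_of_set {1..n} \<Longrightarrow> length xs = n"
  by (auto simp: permutations_of_set_def dest: distinct_card)

lemma smult_sum_r: "smult a (sum f S) = (\<Sum>i\<in>S. smult a (f i))"
  by (induction S rule: infinite_finite_induct) (simp_all add: smult_add_right)

lemma pderiv_sum_r: "pderiv (sum f S) = (\<Sum>i\<in>S. pderiv (f i))"
  by (induction S rule: infinite_finite_induct) (simp_all add: pderiv_add)

theorem theorem2p2:
  fixes n :: nat
  assumes "n \<ge> 1"
  shows "B n = CB n + smult (1 / real n) ([:1, -1:] * pderiv (CB n))"
proof -
  let ?P = "permutations_of_set {1..n}"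
  have "smult (real n) (B n) = (\<Sum>k<n. \<Sum>xs\<in>?P. monom (1::real) (bnd (rotate k xs)))"
  proof -
    have "(\<Sum>k<n. \<Sum>xs\<in>?P. monom (1::real) (bnd (rotate k xs))) = (\<Sum>k<n. B n)"
      unfolding B_def by (rule sum.cong[OF refl], simp only: sum_rotate[of "\<lambda>xs. monom (1::real) (bnd xs)"])
    then show ?thesis by (simp add: of_nat_poly)
  qed
  also have "\<dots> = (\<Sum>xs\<in>?P. \<Sum>k<length xs. monom (1::real) (bnd (rotate k xs)))"
    by (subst sum.swap) (rule sum.cong, simp_all add: perm_length)
  also have "\<dots> = (\<Sum>xs\<in>?P. smult (real n) (monom 1 (cbnd xs)) + [:1, -1:] * pderiv (monom 1 (cbnd xs)))"
  proof (rule sum.cong)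
    fix xs assume xs: "xs \<in> ?P"
    then have "xs \<noteq> []" using assms perm_length[OF xs] by auto
    then show "(\<Sum>k<length xs. monom (1::real) (bnd (rotate k xs))) =
      smult (real n) (monom 1 (cbnd xs)) + [:1, -1:] * pderiv (monom 1 (cbnd xs))"
      using per_list perm_length[OF xs] by metis
  qed simp
  also have "\<dots> = smult (real n) (CB n) + [:1, -1:] * pderiv (CB n)"
    by (simp add: CB_def sum.distrib smult_sum_r pderiv_sum_r sum_distrib_left)
  finally have eq: "smult (real n) (B n) = smult (real n) (CB n) + [:1, -1:] * pderiv (CB n)" .
  have "B n = smult (1 / real n) (smult (real n) (B n))" using assms by simp
  also have "\<dots> = CB n + smult (1 / real n) ([:1, -1:] * pderiv (CB n))"
    unfolding eq using assms by (simp add: smult_add_right)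
  finally show ?thesis .
qed

end
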